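(* Consider observations $y_i = y(t_i) = F(x_0)(t_i) + \epsilon_i$, $i=1,\dots,n$, where $F:\mathbf X\to\mathbf Y$ is a known linear operator between Hilbert spaces of real functions, $t_1,\dots,t_n$ is a fixed design, and $\epsilon_1,\dots,\epsilon_n$ are independent errors with zero mean and finite variance $\sigma^2$. Let $(\lambda_j;\varphi_j,\psi_j)_{j=1,\dots,n}$ be a singular system of $F$ as described in the context, write $x_0=\sum_{j=1}^n x_{j,0}\psi_j$, fix a constant $c>0$ and put $\mu_j = \frac{2c}{\lambda_j}\sqrt{\frac{\log n}{n}}$, $j=1,\dots,n$. Let $$\hat x_n=\sum_{j=1}^n \hat x_j\psi_j \in \arg\min_{x=\sum_{j=1}^n x_j\psi_j\in \mathbf X}\Big[\sum_{j=1}^n\Big|\Big\langle y-F(x),\frac{\varphi_j}{\lambda_j}\Big\rangle_n\Big|^2+\sum_{j=1}^n\mu_j|x_j|\Big].$$ Let $x_*=\sum_{j=1}^n x_{j,*}\psi_j$ with $x_{j,*}=x_{j,0}$ if $|x_{j,0}|>\mu_j$ and $x_{j,*}=0$ otherwise, let $\mathcal J_n=\{j\in\{1,\dots,n\}: |x_{j,0}|>\mu_j\}$, let $V_j=\frac1n\sum_{i=1}^n\varphi_j(t_i)\epsilon_i$, and let $B_n$ be the event $\{\max_{j=1,\dots,n}|V_j|\le c\sqrt{\log n/n}\}$. Then on $B_n$, $$\|\hat x_n-x_0\|_n^2\le \|x_*-x_0\|_n^2+4c\sqrt{\frac{\log n}{n}}\sum_{j\in\mathcal J_n}\frac{|\hat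 x_j-x_{j,0}|}{\lambda_j}.$$
   Context: The empirical norm is $\|y\|_n^2=\frac1n\sum_{i=1}^n y(t_i)^2$ with empirical inner product $\langle y,z\rangle_n=\frac1n\sum_{i=1}^n y(t_i)z(t_i)$; for $y=(y_i)$ a data vector, $\langle y,\varphi\rangle_n=\frac1n\sum_i y_i\varphi(t_i)$. The singular system satisfies $F\psi_j=\lambda_j\varphi_j$, $F^*\varphi_j=\lambda_j\psi_j$, where $\lambda_j^2>0$ are the nonzero eigenvalues of $F^*F$ in decreasing order, and $\{\psi_j\}$, $\{\varphi_j\}$ are complete orthonormal systems with respect to $\|\cdot\|_n$ of eigenvectors of $F^*F$ and $FF^*$ respectively; thus $Fx=\sum_j\lambda_j\langle x,\psi_j\rangle\varphi_j$, and for $x=\sum_j x_j\psi_j$, $\|x\|_n^2=\sum_j x_j^2$. *)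

theory Defs
  imports "HOL-Probability.Probability"
begin

definition emp_inner :: "nat \<Rightarrow> (nat \<Rightarrow> 't) \<Rightarrow> ('t \<Rightarrow> real) \<Rightarrow> ('t \<Rightarrow> real) \<Rightarrow> real" where
  "emp_inner n t f g = (1 / real n) * (\<Sum>i=1..n. f (t i) * g (t i))"

definition emp_norm2 :: "nat \<Rightarrow> (nat \<Rightarrow> 't) \<Rightarrow> ('t \<Rightarrow> real) \<Rightarrow> real" where
  "emp_norm2 n t f = emp_inner n t f f"

definition emp_inner_data :: "nat \<Rightarrow> (nat \<Rightarrow> 't) \<Rightarrow> (nat \<Rightarrow> real) \<Rightarrow> ('t \<Rightarrow> real) \<Rightarrow> real" where
  "emp_inner_data n t y g = (1 / real n) * (\<Sum>i=1..n. y i * g (t i))"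

definition expand :: "nat \<Rightarrow> (nat \<Rightarrow> 't \<Rightarrow> real) \<Rightarrow> (nat \<Rightarrow> real) \<Rightarrow> ('t \<Rightarrow> real)" where
  "expand n \<psi> c = (\<lambda>s. \<Sum>j=1..n. c j * \<psi> j s)"

definition objective ::
  "nat \<Rightarrow> (nat \<Rightarrow> 't) \<Rightarrow> (('t \<Rightarrow> real) \<Rightarrow> ('t \<Rightarrow> real)) \<Rightarrow> (nat \<Rightarrow> real)
   \<Rightarrow> (nat \<Rightarrow> 't \<Rightarrow> real) \<Rightarrow> (nat \<Rightarrow> 't \<Rightarrow> real) \<Rightarrow> (nat \<Rightarrow> real) \<Rightarrow> (nat \<Rightarrow> real)
   \<Rightarrow> (nat \<Rightarrow> real) \<Rightarrow> real" where
  "objective n t F lam \<phi> \<psi> \<mu> y c =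
     (\<Sum>j=1..n. \<bar>emp_inner_data n t (\<lambda>i. y i - F (expand n \<psi> c) (t i)) (\<lambda>s. \<phi> j s / lam j)\<bar>^2)
     + (\<Sum>j=1..n. \<mu> j * \<bar>c j\<bar>)"

end

theory Submission
  imports Defs
begin


lemma emp_inner_sum_left:
  "emp_inner n t (\<lambda>s. \<Sum>j\<in>A. a j * f j s) g = (\<Sum>j\<in>A. a j * emp_inner n t (f j) g)"
  unfolding emp_inner_def
  by (simp add: sum_distrib_left sum_distrib_right mult.assoc mult.left_commute sum.swap[of _ A])

lemma emp_inner_sum_right:
  "emp_inner n t g (\<lambda>s. \<Sum>j\<in>A. a j * f j s) = (\<Sum>j\<in>A. a j * emp_inner n t g (f j))"
  unfolding emp_inner_def
  by (simp add: sum_distrib_left sum_distrib_right mult.assoc mult.left_commute sum.swap[of _ A])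

lemma coord_J:
  fixes xh x0 w m :: real
  assumes "\<bar>w\<bar> \<le> m/2" "m \<ge> 0"
  shows "(xh - x0)^2 - (x0 - x0)^2 - 2*m*\<bar>xh - x0\<bar>
     \<le> ((x0 - xh + w)^2 + m*\<bar>xh\<bar>) - ((x0 - x0 + w)^2 + m*\<bar>x0\<bar>)"
proof -
  have "\<bar>2*(xh-x0)*w\<bar> \<le> m*\<bar>xh-x0\<bar>"
  proof -
    have "\<bar>2*(xh-x0)*w\<bar> = \<bar>xh-x0\<bar> * (2*\<bar>w\<bar>)" by (simp only: abs_mult)
    also have "\<dots> \<le> \<bar>xh-x0\<bar> * m" using assms by (intro mult_left_mono) auto
    finally show ?thesis by (simp add: mult.commute)
  qed
  moreover have "m*\<bar>x0\<bar> - m*\<bar>xh\<bar> \<le> m*\<bar>xh-x0\<bar>"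
  proof -
    have "\<bar>x0\<bar> - \<bar>xh\<bar> \<le> \<bar>xh-x0\<bar>" by linarith
    thus ?thesis using assms(2) by (metis mult_left_mono right_diff_distrib)
  qed
  ultimately show ?thesis by (simp add: power2_eq_square algebra_simps)
qed

lemma coord_nJ:
  fixes xh x0 w m :: real
  assumes "\<bar>w\<bar> \<le> m/2" "m \<ge> 0"
  shows "(xh - x0)^2 - (0 - x0)^2 - 0
     \<le> ((x0 - xh + w)^2 + m*\<bar>xh\<bar>) - ((x0 - 0 + w)^2 + m*\<bar>0\<bar>)"
proof -
  have "\<bar>2*xh*w\<bar> \<le> m*\<bar>xh\<bar>"
  proof -
    have "\<bar>2*xh*w\<bar> = \<bar>xh\<bar> * (2*\<bar>w\<bar>)" by (simp add: abs_mult)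
    also have "\<dots> \<le> \<bar>xh\<bar> * m" using assms by (intro mult_left_mono) auto
    finally show ?thesis by (simp add: mult.commute)
  qed
  thus ?thesis by (simp add: power2_eq_square algebra_simps)
qed

theorem theorem1:
  fixes M :: "'w measure"
    and n :: nat and t :: "nat \<Rightarrow> 't"
    and F :: "('t \<Rightarrow> real) \<Rightarrow> ('t \<Rightarrow> real)"
    and lam :: "nat \<Rightarrow> real" and \<phi> \<psi> :: "nat \<Rightarrow> 't \<Rightarrow> real"
    and x0 :: "nat \<Rightarrow> real" and \<epsilon> :: "nat \<Rightarrow> 'w \<Rightarrow> real" and \<sigma> c :: real
    and xhat :: "'w \<Rightarrow> nat \<Rightarrow> real" and \<omega> :: 'w
  assumes prob: "prob_space M"
    and rv: "\<And>i. i \<in> {1..n} \<Longrightarrow> \<epsilon> i \<in> borel_measurable M"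
    and indep: "prob_space.indep_vars M (\<lambda>_. borel) \<epsilon> {1..n}"
    and sq_int: "\<And>i. i \<in> {1..n} \<Longrightarrow> integrable M (\<lambda>w. (\<epsilon> i w)^2)"
    and mean0: "\<And>i. i \<in> {1..n} \<Longrightarrow> prob_space.expectation M (\<epsilon> i) = 0"
    and var: "\<And>i. i \<in> {1..n} \<Longrightarrow> prob_space.variance M (\<epsilon> i) = \<sigma>^2"
    and n_pos: "n \<ge> 1"
    and lam_pos: "\<And>j. j \<in> {1..n} \<Longrightarrow> lam j > 0"
    and lam_decr: "\<And>j k. 1 \<le> j \<Longrightarrow> j \<le> k \<Longrightarrow> k \<le> n \<Longrightarrow> lam k \<le> lam j"
    and phi_on: "\<And>j k. j \<in> {1..n} \<Longrightarrow> k \<in> {1..n} \<Longrightarrow>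
                   emp_inner n t (\<phi> j) (\<phi> k) = (if j = k then 1 else 0)"
    and psi_on: "\<And>j k. j \<in> {1..n} \<Longrightarrow> k \<in> {1..n} \<Longrightarrow>
                   emp_inner n t (\<psi> j) (\<psi> k) = (if j = k then 1 else 0)"
    and F_svd: "\<And>a. F (expand n \<psi> a) = (\<lambda>s. \<Sum>j=1..n. lam j * a j * \<phi> j s)"
    and c_pos: "c > 0"
    and argmin: "\<And>w a. w \<in> space M \<Longrightarrow>
        objective n t F lam \<phi> \<psi> (\<lambda>j. 2 * c / lam j * sqrt (ln (real n) / real n))
          (\<lambda>i. F (expand n \<psi> x0) (t i) + \<epsilon> i w) (xhat w)
        \<le> objective n t F lam \<phi> \<psi> (\<lambda>j. 2 * c / lam j * sqrt (ln (real n) / real n))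
          (\<lambda>i. F (expand n \<psi> x0) (t i) + \<epsilon> i w) a"
    and \<omega>_in: "\<omega> \<in> space M"
    and B_n: "\<forall>j\<in>{1..n}. \<bar>(1 / real n) * (\<Sum>i=1..n. \<phi> j (t i) * \<epsilon> i \<omega>)\<bar>
                 \<le> c * sqrt (ln (real n) / real n)"
  shows "emp_norm2 n t (\<lambda>s. expand n \<psi> (xhat \<omega>) s - expand n \<psi> x0 s)
         \<le> emp_norm2 n t (\<lambda>s. expand n \<psi>
               (\<lambda>j. if \<bar>x0 j\<bar> > 2 * c / lam j * sqrt (ln (real n) / real n) then x0 j else 0) s
             - expand n \<psi> x0 s)
           + 4 * c * sqrt (ln (real n) / real n) *
             (\<Sum>j\<in>{j\<in>{1..n}. \<bar>x0 j\<bar> > 2 * c / lam j * sqrt (ln (real n) / real n)}.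
                \<bar>xhat \<omega> j - x0 j\<bar> / lam j)"
  proof -
  define r where "r = sqrt (ln (real n) / real n)"
  define mu where "mu = (\<lambda>j. 2 * c / lam j * r)"
  define V where "V = (\<lambda>k. (1 / real n) * (\<Sum>i=1..n. \<phi> k (t i) * \<epsilon> i \<omega>))"
  define y where "y = (\<lambda>i. F (expand n \<psi> x0) (t i) + \<epsilon> i \<omega>)"
  define xs where "xs = (\<lambda>j. if \<bar>x0 j\<bar> > 2 * c / lam j * sqrt (ln (real n) / real n) then x0 j else 0)"
  define xh where "xh = xhat \<omega>"
  have "ln (real n) \<ge> 0" using n_pos by simp
  hence r0: "r \<ge> 0" unfolding r_def by simp
  have mu0: "mu k \<ge> 0" if "k \<in> {1..n}" for k
    using lam_pos[OF that] c_pos r0 unfolding mu_def by simp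
  have Vb: "\<bar>V k / lam k\<bar> \<le> mu k / 2" if "k \<in> {1..n}" for k
  proof -
    have "\<bar>V k\<bar> \<le> c * r" using B_n that unfolding V_def r_def by blast
    thus ?thesis using lam_pos[OF that] unfolding mu_def
      by (simp add: abs_div divide_le_eq_1 field_simps)
  qed
  have norm: "emp_norm2 n t (\<lambda>s. expand n \<psi> a s - expand n \<psi> b s) = (\<Sum>j=1..n. (a j - b j)^2)" for a b
  proof -
    have e: "(\<lambda>s. expand n \<psi> a s - expand n \<psi> b s) = (\<lambda>s. \<Sum>j=1..n. (a j - b j) * \<psi> j s)"
      unfolding expand_def by (simp add: sum_subtractf left_diff_distrib)
    have "emp_norm2 n t (\<lambda>s. \<Sum>j=1..n. (a j - b j) * \<psi> j s)
       = (\<Sum>j=1..n. (a j - b j) * (\<Sum>k=1..n. (a k - b k) * emp_inner n t (\<psi> j) (\<psi> k)))"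
      unfolding emp_norm2_def emp_inner_sum_left emp_inner_sum_right ..
    also have "\<dots> = (\<Sum>j=1..n. (a j - b j) * (a j - b j))"
      by (intro sum.cong refl) (simp add: psi_on if_distrib cong: if_cong)
    finally show ?thesis unfolding e by (simp add: power2_eq_square)
  qed
  have res: "emp_inner_data n t (\<lambda>i. y i - F (expand n \<psi> a) (t i)) (\<lambda>s. \<phi> k s / lam k)
      = x0 k - a k + V k / lam k" if k: "k \<in> {1..n}" for a k
  proof -
    have eq: "(\<lambda>i. y i - F (expand n \<psi> a) (t i)) = (\<lambda>i. (\<Sum>j=1..n. (lam j * (x0 j - a j)) * \<phi> j (t i)) + \<epsilon> i \<omega>)"
      unfolding y_def F_svd by (auto simp: sum_subtractf algebra_simps)
    have "emp_inner_data n t (\<lambda>i. y i - F (expand n \<psi> a) (t i)) (\<lambda>s. \<phi> k s / lam k)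
       = (1 / real n) * (\<Sum>i=1..n. (\<Sum>j=1..n. (lam j * (x0 j - a j)) * \<phi> j (t i)) * \<phi> k (t i) / lam k
            + \<phi> k (t i) * \<epsilon> i \<omega> / lam k)"
      unfolding emp_inner_data_def eq
      by (intro arg_cong2[where f="(*)"] refl sum.cong) (simp_all add: add_divide_distrib algebra_simps)
    also have "\<dots> = emp_inner n t (\<lambda>s. \<Sum>j=1..n. (lam j * (x0 j - a j)) * \<phi> j s) (\<phi> k) / lam k + V k / lam k"
      unfolding emp_inner_def V_def sum.distrib sum_divide_distrib[symmetric] by (simp add: distrib_left)
    also have "emp_inner n t (\<lambda>s. \<Sum>j=1..n. (lam j * (x0 j - a j)) * \<phi> j s) (\<phi> k) = lam k * (x0 k - a k)"
      unfolding emp_inner_sum_left using k by (simp add: phi_on if_distrib cong: if_cong)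
    finally show ?thesis using lam_pos[OF k] by simp
  qed
  have obj: "objective n t F lam \<phi> \<psi> mu y a
     = (\<Sum>k=1..n. (x0 k - a k + V k / lam k)^2 + mu k * \<bar>a k\<bar>)" for a
    unfolding objective_def by (simp add: res sum.distrib)
  have am: "objective n t F lam \<phi> \<psi> mu y xh \<le> objective n t F lam \<phi> \<psi> mu y xs"
    using argmin[OF \<omega>_in, of xs] unfolding mu_def r_def y_def xh_def .
  define J where "J = {j\<in>{1..n}. \<bar>x0 j\<bar> > 2 * c / lam j * sqrt (ln (real n) / real n)}"
  have coord: "(xh k - x0 k)^2 - (xs k - x0 k)^2 - (if k \<in> J then 4*c*r*\<bar>xh k - x0 k\<bar> / lam k else 0)
     \<le> ((x0 k - xh k + V k / lam k)^2 + mu k * \<bar>xh k\<bar>) - ((x0 k - xs k + V k / lam k)^2 + mu k * \<bar>xs k\<bar>)"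
    if k: "k \<in> {1..n}" for k
  proof (cases "k \<in> J")
    case True
    hence "xs k = x0 k" unfolding xs_def J_def by auto
    moreover have "4*c*r*\<bar>xh k - x0 k\<bar> / lam k = 2 * mu k * \<bar>xh k - x0 k\<bar>"
      unfolding mu_def by simp
    ultimately show ?thesis using True coord_J[OF Vb[OF k] mu0[OF k], of "xh k" "x0 k"] by simp
  next
    case False
    hence "xs k = 0" unfolding xs_def J_def using k by auto
    thus ?thesis using False coord_nJ[OF Vb[OF k] mu0[OF k], of "xh k" "x0 k"] by simp
  qed
  have "(\<Sum>k=1..n. (xh k - x0 k)^2 - (xs k - x0 k)^2 - (if k \<in> J then 4*c*r*\<bar>xh k - x0 k\<bar> / lam k else 0))
     \<le> (\<Sum>k=1..n. ((x0 k - xh k + V k / lam k)^2 + mu k * \<bar>xh k\<bar>) - ((x0 k - xs k + V k / lam k)^2 + mu k * \<bar>xs k\<bar>))"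
    by (rule sum_mono) (rule coord)
  also have "\<dots> \<le> 0" using am unfolding obj by (simp add: sum_subtractf)
  finally have main: "(\<Sum>k=1..n. (xh k - x0 k)^2) \<le> (\<Sum>k=1..n. (xs k - x0 k)^2)
      + (\<Sum>k=1..n. if k \<in> J then 4*c*r*\<bar>xh k - x0 k\<bar> / lam k else 0)"
    by (simp add: sum_subtractf)
  have "(\<Sum>k=1..n. if k \<in> J then 4*c*r*\<bar>xh k - x0 k\<bar> / lam k else 0)
      = (\<Sum>k\<in>J. 4*c*r*\<bar>xh k - x0 k\<bar> / lam k)"
  proof -
    have JJ: "{1..n} \<inter> J = J" by (auto simp: J_def)
    show ?thesis using sum.inter_restrict[of "{1..n}" "\<lambda>k. 4*c*r*\<bar>xh k - x0 k\<bar> / lam k" J]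
      unfolding JJ by simp
  qed
  also have "\<dots> = 4*c*r*(\<Sum>k\<in>J. \<bar>xh k - x0 k\<bar> / lam k)"
    by (simp add: sum_distrib_left)
  finally have fin: "(\<Sum>k=1..n. (xh k - x0 k)^2) \<le> (\<Sum>k=1..n. (xs k - x0 k)^2)
      + 4*c*r*(\<Sum>k\<in>J. \<bar>xh k - x0 k\<bar> / lam k)" using main by simp
  show ?thesis using fin unfolding norm xs_def J_def r_def xh_def .
qed


end
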